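(* Let $(A,m)$ be a strict $A_\infty$-algebra over a field $\mathbf{F}$, let $\lambda\in\mathbf{F}$ with $\lambda\neq0$ and $a,b\in\mathbf{Z}$, and let $\tilde m_k=\lambda^{ak+b}m_k$ for $k\ge1$. Then there is an $A_\infty$ quasi-isomorphism $(A,\tilde m)\to(A,m)$.
   Context: A strict $A_\infty$-algebra $(A,m)$ over $\mathbf{F}$ is a $\mathbf{Z}$-graded vector space $A=\bigoplus_kA^k$ with graded linear maps $m_n:A^{\otimes n}\to A$ ($n\ge1$) of degree $2-n$ satisfying $\sum_{n=r+s+t}(-1)^{rs+t}m_{r+1+t}(\mathbf{I}^{\otimes r}\otimes m_s\otimes\mathbf{I}^{\otimes t})=0$ for all $n\ge1$ ($r,t\ge0,s\ge1$), with the Koszul sign rule $(f\otimes g)(x\otimes y)=(-1)^{|g||x|}f(x)\otimes g(y)$; $(A,\tilde m)$ is again such an algebra. A homomorphism $f:(A,m^A)\to(B,m^B)$ of strict $A_\infty$-algebras is a family of graded maps $f_n:A^{\otimes n}\to B$ ($n\ge1$) of degree $1-n$ with $\sum_{n=r+s+t}(-1)^{rs+t}f_{r+1+t}(\mathbf{I}^{\otimes r}\otimes m^A_s\otimes\mathbf{I}^{\otimes t})=\sum_{n=i_1+\dots+i_k}(-1)^{\sigma}m^B_k(f_{i_k}\otimes\cdots\otimes f_{i_1})$, where $\sigma=(k-1)(i_1-1)+(k-2)(i_2-1)+\dots+2(i_{k-2}-1)+(i_{k-1}-1)$. It is a quasi-isomorphism if $f_1$ induces an isomorphism $H^*(A,m^A_1)\to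 H^*(B,m^B_1)$. *)

theory Defs
  imports Complex_Main
begin

definition ksign :: "int \<Rightarrow> 'f::field" where
  "ksign k = (if even k then 1 else - 1)"

text \<open>A Z-graded vector space over the field 'f, realised internally: the ambient
  vector space is the type 'v with scalar multiplication scale, and Gr k is the
  homogeneous component of degree k.\<close>
definition graded_vs :: "('f::field \<Rightarrow> 'v::ab_group_add \<Rightarrow> 'v) \<Rightarrow> (int \<Rightarrow> 'v set) \<Rightarrow> bool" where
  "graded_vs scale Gr \<longleftrightarrow>
     vector_space scale \<and>
     (\<forall>k. module.subspace scale (Gr k)) \<and>
     (\<forall>v. \<exists>!c :: int \<Rightarrow> 'v. finite {k. c k \<noteq> 0} \<and> (\<forall>k. c k \<in> Gr k)
            \<and> v = (\<Sum>k\<in>{k. c k \<noteq> 0}. c k))"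

definition homog :: "(int \<Rightarrow> 'v set) \<Rightarrow> 'v list \<Rightarrow> int list \<Rightarrow> bool" where
  "homog Gr xs ds \<longleftrightarrow> length xs = length ds \<and> (\<forall>i<length xs. xs ! i \<in> Gr (ds ! i))"

text \<open>A graded linear map A^{\<otimes>n} \<rightarrow> B of degree d, represented (via the universal
  property of the tensor product) as an n-multilinear map on lists of length n.\<close>
definition graded_multilinear ::
  "('f::field \<Rightarrow> 'v::ab_group_add \<Rightarrow> 'v) \<Rightarrow> (int \<Rightarrow> 'v set) \<Rightarrow>
   ('f \<Rightarrow> 'w::ab_group_add \<Rightarrow> 'w) \<Rightarrow> (int \<Rightarrow> 'w set) \<Rightarrow> nat \<Rightarrow> int \<Rightarrow> ('v list \<Rightarrow> 'w) \<Rightarrow> bool" where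
  "graded_multilinear sA GA sB GB n d g \<longleftrightarrow>
     (\<forall>xs i. length xs = n \<longrightarrow> i < n \<longrightarrow> Vector_Spaces.linear sA sB (\<lambda>y. g (xs[i := y]))) \<and>
     (\<forall>xs ds. length xs = n \<longrightarrow> homog GA xs ds \<longrightarrow> g xs \<in> GB (sum_list ds + d))"

text \<open>Strict A-infinity algebra: m n :: A^{\<otimes>n} \<rightarrow> A of degree 2-n, satisfying
  sum_{r+s+t=n, s\<ge>1} (-1)^{rs+t} m_{r+1+t}(I^r \<otimes> m_s \<otimes> I^t) = 0,
  evaluated on homogeneous tensors x_1 \<otimes> ... \<otimes> x_n with the Koszul sign
  (-1)^{|m_s| (|x_1|+...+|x_r|)}.\<close>
definition ainf_lhs_term ::
  "('f::field \<Rightarrow> 'v::ab_group_add \<Rightarrow> 'v) \<Rightarrow> (nat \<Rightarrow> 'v list \<Rightarrow> 'w::ab_group_add) \<Rightarrow>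
   ('f \<Rightarrow> 'w \<Rightarrow> 'w) \<Rightarrow> (nat \<Rightarrow> 'v list \<Rightarrow> 'v) \<Rightarrow> 'v list \<Rightarrow> int list \<Rightarrow> 'w" where
  "ainf_lhs_term sA F sB m xs ds =
     (let n = length xs in
      \<Sum>r\<in>{0..n}. \<Sum>s\<in>{1..n - r}.
        (let t = n - r - s in
         sB (ksign (int r * int s + int t) * ksign ((2 - int s) * sum_list (take r ds)))
            (F (r + 1 + t) (take r xs @ [m s (take s (drop r xs))] @ drop (r + s) xs))))"

definition ainf_algebra ::
  "('f::field \<Rightarrow> 'v::ab_group_add \<Rightarrow> 'v) \<Rightarrow> (int \<Rightarrow> 'v set) \<Rightarrow> (nat \<Rightarrow> 'v list \<Rightarrow> 'v) \<Rightarrow> bool" where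
  "ainf_algebra scale Gr m \<longleftrightarrow>
     graded_vs scale Gr \<and>
     (\<forall>n\<ge>1. graded_multilinear scale Gr scale Gr n (2 - int n) (m n)) \<and>
     (\<forall>n\<ge>1. \<forall>xs ds. length xs = n \<longrightarrow> homog Gr xs ds \<longrightarrow>
        ainf_lhs_term scale m scale m xs ds = 0)"

fun blocks :: "nat list \<Rightarrow> 'a list \<Rightarrow> 'a list list" where
  "blocks [] xs = []"
| "blocks (c # cs) xs = take c xs # blocks cs (drop c xs)"

text \<open>Compositions n = i_1 + ... + i_k (k \<ge> 1, all i_j \<ge> 1). We store the list
  cs = [i_k, ..., i_1] of block sizes in the order in which the blocks of inputs
  are consumed, so that cs ! l = i_{k-l} and
  sigma = (k-1)(i_1-1) + ... + 1 (i_{k-1}-1) = sum_{l<k} l (cs!l - 1).\<close>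
definition compositions :: "nat \<Rightarrow> nat list set" where
  "compositions n = {cs. cs \<noteq> [] \<and> (\<forall>c\<in>set cs. 1 \<le> c) \<and> sum_list cs = n}"

definition hom_sigma :: "nat list \<Rightarrow> int" where
  "hom_sigma cs = (\<Sum>l<length cs. int l * (int (cs ! l) - 1))"

text \<open>Koszul sign of (f_{i_k} \<otimes> ... \<otimes> f_{i_1}) applied to homogeneous x_1 \<otimes> ... \<otimes> x_n:
  each factor (of degree 1 - i) passes the inputs of all earlier blocks.\<close>
definition hom_koszul :: "nat list \<Rightarrow> int list \<Rightarrow> int" where
  "hom_koszul cs ds = (\<Sum>l<length cs. (1 - int (cs ! l)) * sum_list (take (sum_list (take l cs)) ds))"

definition hom_rhs ::
  "('f::field \<Rightarrow> 'w::ab_group_add \<Rightarrow> 'w) \<Rightarrow> (nat \<Rightarrow> 'w list \<Rightarrow> 'w) \<Rightarrow>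
   (nat \<Rightarrow> 'v list \<Rightarrow> 'w) \<Rightarrow> 'v list \<Rightarrow> int list \<Rightarrow> 'w" where
  "hom_rhs sB mB f xs ds =
     (\<Sum>cs\<in>compositions (length xs).
        sB (ksign (hom_sigma cs) * ksign (hom_koszul cs ds))
           (mB (length cs) (map2 f cs (blocks cs xs))))"

definition ainf_hom ::
  "('f::field \<Rightarrow> 'v::ab_group_add \<Rightarrow> 'v) \<Rightarrow> (int \<Rightarrow> 'v set) \<Rightarrow> (nat \<Rightarrow> 'v list \<Rightarrow> 'v) \<Rightarrow>
   ('f \<Rightarrow> 'w::ab_group_add \<Rightarrow> 'w) \<Rightarrow> (int \<Rightarrow> 'w set) \<Rightarrow> (nat \<Rightarrow> 'w list \<Rightarrow> 'w) \<Rightarrow>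
   (nat \<Rightarrow> 'v list \<Rightarrow> 'w) \<Rightarrow> bool" where
  "ainf_hom sA GA mA sB GB mB f \<longleftrightarrow>
     (\<forall>n\<ge>1. graded_multilinear sA GA sB GB n (1 - int n) (f n)) \<and>
     (\<forall>n\<ge>1. \<forall>xs ds. length xs = n \<longrightarrow> homog GA xs ds \<longrightarrow>
        ainf_lhs_term sA f sB mA xs ds = hom_rhs sB mB f xs ds)"

text \<open>f_1 induces an isomorphism H(A, m1) \<rightarrow> H(B, m1), spelled out:
  induced map on cohomology is surjective and injective (well-definedness follows
  from f_1 being a chain map, a consequence of the homomorphism identity for n = 1).\<close>
definition quasi_iso ::
  "(nat \<Rightarrow> 'v list \<Rightarrow> 'v) \<Rightarrow> (nat \<Rightarrow> 'w::ab_group_add list \<Rightarrow> 'w) \<Rightarrow>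
   (nat \<Rightarrow> 'v::ab_group_add list \<Rightarrow> 'w) \<Rightarrow> bool" where
  "quasi_iso mA mB f \<longleftrightarrow>
     (\<forall>z. mB 1 [z] = 0 \<longrightarrow> (\<exists>z'. mA 1 [z'] = 0 \<and> (\<exists>u. f 1 [z'] - z = mB 1 [u]))) \<and>
     (\<forall>z. mA 1 [z] = 0 \<longrightarrow> (\<exists>u. f 1 [z] = mB 1 [u]) \<longrightarrow> (\<exists>v. z = mA 1 [v]))"

end

theory Submission
  imports Defs
begin

locale gvs =
  fixes scale :: "'f::field \<Rightarrow> 'v::ab_group_add \<Rightarrow> 'v" and Gr :: "int \<Rightarrow> 'v set"
  assumes G: "graded_vs scale Gr"
begin

lemma VS: "vector_space scale" using G by (simp add: graded_vs_def)
sublocale V: vector_space scale by (rule VS)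

lemma sub: "V.subspace (Gr k)" using G by (simp add: graded_vs_def)
lemma zero_in: "0 \<in> Gr k" using sub V.subspace_0 by blast
lemma add_in: "x \<in> Gr k \<Longrightarrow> y \<in> Gr k \<Longrightarrow> x + y \<in> Gr k" using sub V.subspace_add by blast
lemma scale_in: "x \<in> Gr k \<Longrightarrow> scale c x \<in> Gr k" using sub V.subspace_scale by blast

definition P :: "'v \<Rightarrow> (int \<Rightarrow> 'v) \<Rightarrow> bool" where
  "P v c \<longleftrightarrow> finite {k. c k \<noteq> 0} \<and> (\<forall>k. c k \<in> Gr k) \<and> v = (\<Sum>k\<in>{k. c k \<noteq> 0}. c k)"

definition dec :: "'v \<Rightarrow> int \<Rightarrow> 'v" where "dec v = (THE c. P v c)"

lemma ex1: "\<exists>!c. P v c" using G unfolding graded_vs_def P_def by blast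

lemma dec_P: "P v (dec v)" unfolding dec_def using ex1 by (rule theI')
lemma dec_unique: "P v c \<Longrightarrow> dec v = c" unfolding dec_def using ex1 by (rule the1_equality)

lemma P_intro:
  assumes "finite S" "{k. c k \<noteq> 0} \<subseteq> S" "\<And>k. c k \<in> Gr k" "v = (\<Sum>k\<in>S. c k)"
  shows "P v c"
proof -
  have "(\<Sum>k\<in>S. c k) = (\<Sum>k\<in>{k. c k \<noteq> 0}. c k)"
    using assms(1,2) by (intro sum.mono_neutral_right) auto
  then show ?thesis using assms finite_subset unfolding P_def by auto
qed

lemma dec_fin: "finite {k. dec v k \<noteq> 0}" using dec_P unfolding P_def by blast
lemma dec_in: "dec v k \<in> Gr k" using dec_P unfolding P_def by blast
lemma dec_sum: "finite S \<Longrightarrow> {k. dec v k \<noteq> 0} \<subseteq> S \<Longrightarrow> v = (\<Sum>k\<in>S. dec v k)"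
proof -
  assume a: "finite S" "{k. dec v k \<noteq> 0} \<subseteq> S"
  have "(\<Sum>k\<in>S. dec v k) = (\<Sum>k\<in>{k. dec v k \<noteq> 0}. dec v k)"
    using a by (intro sum.mono_neutral_right) auto
  then show ?thesis using dec_P unfolding P_def by auto
qed

lemma dec_add: "dec (x + y) = (\<lambda>k. dec x k + dec y k)"
proof (rule dec_unique, rule P_intro)
  let ?S = "{k. dec x k \<noteq> 0} \<union> {k. dec y k \<noteq> 0}"
  show "finite ?S" using dec_fin by auto
  show "{k. dec x k + dec y k \<noteq> 0} \<subseteq> ?S" by auto
  show "\<And>k. dec x k + dec y k \<in> Gr k" using dec_in add_in by blast
  show "x + y = (\<Sum>k\<in>?S. dec x k + dec y k)"
    using dec_sum[of ?S x] dec_sum[of ?S y] dec_fin by (simp add: sum.distrib)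
qed

lemma dec_scale: "dec (scale r x) = (\<lambda>k. scale r (dec x k))"
proof (rule dec_unique, rule P_intro)
  let ?S = "{k. dec x k \<noteq> 0}"
  show "finite ?S" using dec_fin by auto
  show "{k. scale r (dec x k) \<noteq> 0} \<subseteq> ?S" by auto
  show "\<And>k. scale r (dec x k) \<in> Gr k" using dec_in scale_in by blast
  show "scale r x = (\<Sum>k\<in>?S. scale r (dec x k))"
    using dec_sum[of ?S x] dec_fin by (simp add: V.scale_sum_right[symmetric])
qed

lemma dec_hom: "y \<in> Gr k \<Longrightarrow> dec y = (\<lambda>j. if j = k then y else 0)"
  by (rule dec_unique, rule P_intro[where S="{k}"]) (auto simp: zero_in)

definition phi :: "(int \<Rightarrow> 'f) \<Rightarrow> 'v \<Rightarrow> 'v" where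
  "phi e v = (\<Sum>k\<in>{k. dec v k \<noteq> 0}. scale (e k) (dec v k))"

lemma phi_S: "finite S \<Longrightarrow> {k. dec v k \<noteq> 0} \<subseteq> S \<Longrightarrow> phi e v = (\<Sum>k\<in>S. scale (e k) (dec v k))"
  unfolding phi_def by (intro sum.mono_neutral_left) auto

lemma phi_add: "phi e (x + y) = phi e x + phi e y"
proof -
  let ?S = "{k. dec x k \<noteq> 0} \<union> {k. dec y k \<noteq> 0}"
  have f: "finite ?S" using dec_fin by auto
  have "phi e (x + y) = (\<Sum>k\<in>?S. scale (e k) (dec (x+y) k))"
    by (rule phi_S[OF f]) (auto simp: dec_add)
  also have "\<dots> = (\<Sum>k\<in>?S. scale (e k) (dec x k)) + (\<Sum>k\<in>?S. scale (e k) (dec y k))"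
    by (simp add: dec_add V.scale_right_distrib sum.distrib)
  also have "\<dots> = phi e x + phi e y"
    using phi_S[OF f, of x e] phi_S[OF f, of y e] by auto
  finally show ?thesis .
qed

lemma phi_scale: "phi e (scale r x) = scale r (phi e x)"
proof -
  let ?S = "{k. dec x k \<noteq> 0}"
  have f: "finite ?S" using dec_fin by auto
  have "phi e (scale r x) = (\<Sum>k\<in>?S. scale (e k) (dec (scale r x) k))"
    by (rule phi_S[OF f]) (auto simp: dec_scale)
  also have "\<dots> = scale r (phi e x)"
    by (simp add: dec_scale phi_def V.scale_sum_right V.scale_left_commute mult.commute)
  finally show ?thesis .
qed

lemma phi_hom: "y \<in> Gr k \<Longrightarrow> phi e y = scale (e k) y"
  by (subst phi_S[where S="{k}"]) (auto simp: dec_hom)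

lemma phi_linear: "Vector_Spaces.linear scale scale (phi e)"
  by (rule linear_module_homI) (auto intro!: module_hom.intro module_hom_axioms.intro
      simp: V.module_axioms phi_add phi_scale)

lemma agree:
  fixes g h :: "'v \<Rightarrow> 'v"
  assumes "\<And>x y. g (x + y) = g x + g y" "\<And>x y. h (x + y) = h x + h y"
    and "\<And>k y. y \<in> Gr k \<Longrightarrow> g y = h y"
  shows "g v = h v"
proof -
  have gs: "g (sum u S) = (\<Sum>k\<in>S. g (u k))" if "finite S" for u :: "int \<Rightarrow> 'v" and S
    using that proof induct
    case empty show ?case using assms(1)[of 0 0] by simp
  qed (simp add: assms(1))
  have hs: "h (sum u S) = (\<Sum>k\<in>S. h (u k))" if "finite S" for u :: "int \<Rightarrow> 'v" and S
    using that proof induct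
    case empty show ?case using assms(2)[of 0 0] by simp
  qed (simp add: assms(2))
  let ?S = "{k. dec v k \<noteq> 0}"
  have v: "v = (\<Sum>k\<in>?S. dec v k)" using dec_sum dec_fin by blast
  have "g v = (\<Sum>k\<in>?S. g (dec v k))" by (subst v, rule gs[OF dec_fin])
  also have "\<dots> = (\<Sum>k\<in>?S. h (dec v k))" by (rule sum.cong[OF refl]) (rule assms(3)[OF dec_in])
  also have "\<dots> = h v" by (subst (2) v, rule hs[OF dec_fin, symmetric])
  finally show ?thesis .
qed

lemma phi_inv: assumes "\<And>k. e k * e' k = 1" shows "phi e (phi e' v) = v"
  by (rule agree[where g="\<lambda>v. phi e (phi e' v)" and h="\<lambda>v. v", of v]) 
     (auto simp: phi_add, simp add: phi_hom phi_hom[OF scale_in] assms V.scale_scale)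

end

lemma lin_add: "Vector_Spaces.linear s1 s2 g \<Longrightarrow> g (x + y) = g x + g y"
  by (simp add: linear_iff_module_hom module_hom.add)
lemma lin_scale: "Vector_Spaces.linear s1 s2 g \<Longrightarrow> g (s1 r x) = s2 r (g x)"
  by (simp add: linear_iff_module_hom module_hom.scale)
lemma lin_zero: "Vector_Spaces.linear s1 s2 g \<Longrightarrow> g 0 = 0"
  by (simp add: linear_iff_module_hom module_hom.zero)

lemma ml_zero:
  assumes "\<forall>xs i. length xs = n \<longrightarrow> i < n \<longrightarrow> Vector_Spaces.linear s1 s2 (\<lambda>y. g (xs[i := y]))"
    and "length L = n" "i < n" "L ! i = 0"
  shows "g L = 0"
proof -
  have "L = L[i := 0]" using assms(4) by (metis list_update_id)
  then have "g L = (\<lambda>y. g (L[i := y])) 0" by simp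
  also have "\<dots> = 0" by (rule lin_zero) (use assms in blast)
  finally show ?thesis .
qed

lemma ml_scale:
  assumes vs: "vector_space s"
    and lin: "\<forall>xs i. length xs = n \<longrightarrow> i < n \<longrightarrow> Vector_Spaces.linear s s (\<lambda>y. g (xs[i := y]))"
    and len: "length xs = n"
  shows "g (map (\<lambda>i. s (c i) (xs ! i)) [0..<n]) = s (\<Prod>i<n. c i) (g xs)"
proof -
  interpret W: vector_space s by (rule vs)
  define L where "L k = map (\<lambda>i. if i < k then s (c i) (xs ! i) else xs ! i) [0..<n]" for k
  have "k \<le> n \<Longrightarrow> g (L k) = s (\<Prod>i<k. c i) (g xs)" for k
  proof (induction k)
    case 0
    have "L 0 = xs" unfolding L_def using len map_nth[of xs] by simp
    then show ?case by simp
  next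
    case (Suc k)
    have lk: "length (L k) = n" unfolding L_def by simp
    have e1: "L (Suc k) = (L k)[k := s (c k) (xs ! k)]"
      unfolding L_def using Suc.prems by (intro nth_equalityI) (auto simp: nth_list_update)
    have e2: "(L k)[k := xs ! k] = L k"
      unfolding L_def using Suc.prems by (intro nth_equalityI) (auto simp: nth_list_update)
    have l: "Vector_Spaces.linear s s (\<lambda>y. g ((L k)[k := y]))" using lin lk Suc.prems by auto
    have "g (L (Suc k)) = s (c k) (g ((L k)[k := xs ! k]))"
      using lin_scale[OF l, of "c k" "xs ! k"] e1 by simp
    also have "\<dots> = s (c k) (s (\<Prod>i<k. c i) (g xs))" using e2 Suc by simp
    also have "\<dots> = s (\<Prod>i<Suc k. c i) (g xs)" by (simp add: mult.commute)
    finally show ?case .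
  qed
  moreover have "L n = map (\<lambda>i. s (c i) (xs ! i)) [0..<n]" unfolding L_def by simp
  ultimately show ?thesis by (metis order_refl)
qed

lemma prod_powi: assumes "finite S" "(lam::'f::field) \<noteq> 0"
  shows "(\<Prod>i\<in>S. lam powi e i) = lam powi (\<Sum>i\<in>S. e i)"
  using assms(1) by induct (auto simp: power_int_add assms(2))

lemma length_blocks: "length (blocks cs xs) = length cs"
  by (induction cs arbitrary: xs) auto

lemma blocks_rep: "map2 F (replicate (length xs) 1) (blocks (replicate (length xs) 1) xs) = map (\<lambda>x. F 1 [x]) xs"
  by (induction xs) (auto simp: take_Suc_conv_app_nth)

lemma len_le: "\<forall>c\<in>set cs. (1::nat) \<le> c \<Longrightarrow> length cs \<le> sum_list cs"
  by (induction cs) auto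

lemma fin_comp: "finite (compositions n)"
proof -
  have "compositions n \<subseteq> {xs. set xs \<subseteq> {0..n} \<and> length xs \<le> n}"
    unfolding compositions_def using len_le member_le_sum_list by fastforce
  then show ?thesis using finite_lists_length_le[of "{0..n}" n] finite_subset by blast
qed

lemma ksign0: "ksign 0 = 1" by (simp add: ksign_def)


locale ainfl = gvs scale Gr for scale :: "'f::field \<Rightarrow> 'v::ab_group_add \<Rightarrow> 'v" and Gr +
  fixes m :: "nat \<Rightarrow> 'v list \<Rightarrow> 'v" and lam :: 'f and a b :: int
  assumes AA: "ainf_algebra scale Gr m" and lam: "lam \<noteq> 0"
begin

definition w :: "int \<Rightarrow> 'f" where "w k = lam powi (- (a + b) * k + (2 * a + b))"
definition wi :: "int \<Rightarrow> 'f" where "wi k = inverse (w k)"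
definition mt :: "nat \<Rightarrow> 'v list \<Rightarrow> 'v" where "mt k xs = scale (lam powi (a * int k + b)) (m k xs)"
definition F :: "nat \<Rightarrow> 'v list \<Rightarrow> 'v" where "F k xs = (if k = 1 then phi w (hd xs) else 0)"

lemma w_nz: "w k \<noteq> 0" unfolding w_def using lam by simp
lemma w_wi: "w k * wi k = 1" "wi k * w k = 1" unfolding wi_def using w_nz by auto

lemma gm: "n \<ge> 1 \<Longrightarrow> graded_multilinear scale Gr scale Gr n (2 - int n) (m n)"
  using AA unfolding ainf_algebra_def by blast

lemma core:
  assumes h: "homog Gr xs ds" and n: "length xs = n" "n \<ge> 1"
  shows "phi w (mt n xs) = m n (map (phi w) xs)"
proof -
  have g: "graded_multilinear scale Gr scale Gr n (2 - int n) (m n)" using gm n by blast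
  let ?D = "sum_list ds"
  have ld: "length ds = n" using h n unfolding homog_def by simp
  have mi: "m n xs \<in> Gr (?D + (2 - int n))" using g h n unfolding graded_multilinear_def by blast
  have "phi w (mt n xs) = scale (w (?D + (2 - int n))) (scale (lam powi (a * int n + b)) (m n xs))"
    unfolding mt_def by (rule phi_hom[OF scale_in[OF mi]])
  also have "\<dots> = scale (lam powi ((- (a + b)) * (?D + (2 - int n)) + (2 * a + b) + (a * int n + b))) (m n xs)"
    unfolding w_def V.scale_scale power_int_add[OF disjI1[OF lam]] by (rule refl)
  finally have l: "phi w (mt n xs) = \<dots>" .
  have mp: "map (phi w) xs = map (\<lambda>i. scale (w (ds ! i)) (xs ! i)) [0..<n]"
    using h n unfolding homog_def by (intro nth_equalityI) (auto intro!: phi_hom)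
  have "m n (map (phi w) xs) = scale (\<Prod>i<n. w (ds ! i)) (m n xs)"
    unfolding mp by (rule ml_scale[OF VS _ n(1)]) (use g in \<open>simp add: graded_multilinear_def\<close>)
  also have "(\<Prod>i<n. w (ds ! i)) = lam powi (\<Sum>i<n. - (a + b) * ds ! i + (2 * a + b))"
    unfolding w_def by (rule prod_powi[OF _ lam]) simp
  also have "(\<Sum>i<n. - (a + b) * ds ! i + (2 * a + b)) = - (a + b) * ?D + int n * (2 * a + b)"
    using ld by (simp add: sum.distrib sum_distrib_left[symmetric] sum_list_sum_nth atLeast0LessThan)
  finally have r: "m n (map (phi w) xs) = scale (lam powi (- (a + b) * ?D + int n * (2 * a + b))) (m n xs)" .
  have "(- (a + b)) * (?D + (2 - int n)) + (2 * a + b) + (a * int n + b) = - (a + b) * ?D + int n * (2 * a + b)"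
    by (simp add: algebra_simps)
  then show ?thesis using l r by simp
qed


end
context ainfl begin
lemma lhs_red:
  assumes n: "length xs = n" "n \<ge> 1"
  shows "ainf_lhs_term scale F scale mt xs ds = F 1 [mt n xs]"
proof -
  have T: "scale (ksign (int r * int s + int (n - r - s)) * ksign ((2 - int s) * sum_list (take r ds)))
            (F (r + 1 + (n - r - s)) (take r xs @ [mt s (take s (drop r xs))] @ drop (r + s) xs))
         = (if r = 0 then (if s = n then F 1 [mt n xs] else 0) else 0)"
    if "r \<in> {0..n}" "s \<in> {1..n - r}" for r s
  proof (cases "r = 0 \<and> s = n")
    case True then show ?thesis using n by (simp add: ksign0)
  next
    case False
    then have "r + 1 + (n - r - s) \<noteq> 1" using that by auto
    then show ?thesis using False by (auto simp: F_def)
  qed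
  have "ainf_lhs_term scale F scale mt xs ds =
      (\<Sum>r\<in>{0..n}. \<Sum>s\<in>{1..n - r}. (if r = 0 then (if s = n then F 1 [mt n xs] else 0) else 0))"
    unfolding ainf_lhs_term_def Let_def n(1) using T by (intro sum.cong refl) auto
  also have "\<dots> = (\<Sum>r\<in>{0..n}. if r = 0 then F 1 [mt n xs] else 0)"
    using n by (intro sum.cong refl) (auto simp: sum.delta)
  also have "\<dots> = F 1 [mt n xs]" by (simp add: sum.delta)
  finally show ?thesis .
qed

lemma rhs_red:
  assumes h: "homog Gr xs ds" and n: "length xs = n" "n \<ge> 1"
  shows "hom_rhs scale m F xs ds = m n (map (phi w) xs)"
proof -
  let ?r = "replicate n (1::nat)"
  have rin: "?r \<in> compositions n" using n unfolding compositions_def by (auto simp: sum_list_replicate)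
  have z: "scale (ksign (hom_sigma cs) * ksign (hom_koszul cs ds)) (m (length cs) (map2 F cs (blocks cs xs))) = 0"
    if "cs \<in> compositions n - {?r}" for cs
  proof -
    have c1: "cs \<noteq> []" "\<forall>c\<in>set cs. 1 \<le> c" "sum_list cs = n" "cs \<noteq> ?r"
      using that unfolding compositions_def by auto
    have "\<exists>i<length cs. cs ! i \<noteq> 1"
    proof (rule ccontr)
      assume "\<not> ?thesis"
      then have "\<forall>c\<in>set cs. c = 1" by (auto simp: in_set_conv_nth)
      then have "cs = replicate (length cs) 1" by (metis replicate_length_same)
      moreover then have "length cs = n" using c1(3) by (metis sum_list_replicate mult_1_right of_nat_id)
      ultimately show False using c1(4) by simp
    qed
    then obtain i where i: "i < length cs" "cs ! i \<noteq> 1" by blast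
    have "m (length cs) (map2 F cs (blocks cs xs)) = 0"
      apply (rule ml_zero[where n="length cs" and i=i])
      using gm[of "length cs"] c1(1) i
      by (auto simp: graded_multilinear_def length_blocks F_def)
    then show ?thesis by simp
  qed
  have "hom_rhs scale m F xs ds = scale (ksign (hom_sigma ?r) * ksign (hom_koszul ?r ds)) (m (length ?r) (map2 F ?r (blocks ?r xs)))"
    unfolding hom_rhs_def n(1)
    by (subst sum.remove[OF fin_comp rin]) (simp add: sum.neutral z)
  also have "hom_sigma ?r = 0" unfolding hom_sigma_def by simp
  also have "hom_koszul ?r ds = 0" unfolding hom_koszul_def by simp
  also have "map2 F ?r (blocks ?r xs) = map (phi w) xs"
    using blocks_rep[of F xs] n by (simp add: F_def)
  finally show ?thesis by (simp add: ksign0)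
qed

lemma m1_lin: "Vector_Spaces.linear scale scale (\<lambda>y. m 1 [y])"
proof -
  have H: "\<forall>xs i. length xs = 1 \<longrightarrow> i < 1 \<longrightarrow> Vector_Spaces.linear scale scale (\<lambda>y. m 1 (xs[i := y]))"
    using gm[of 1] unfolding graded_multilinear_def by simp
  have "Vector_Spaces.linear scale scale (\<lambda>y. m 1 ([0][0 := y]))"
    using H[rule_format, of "[0]" 0] by simp
  then show ?thesis by simp
qed

lemma F_hom: "ainf_hom scale Gr mt scale Gr m F"
  unfolding ainf_hom_def
proof (intro conjI allI impI)
  fix n :: nat assume n: "n \<ge> 1"
  show "graded_multilinear scale Gr scale Gr n (1 - int n) (F n)"
  proof (cases "n = 1")
    case True
    have l: "Vector_Spaces.linear scale scale (\<lambda>y. F n (xs[i := y]))" if aa: "length xs = n" "i < n" for xs i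
    proof -
      have i0: "i = 0" using aa True by simp
      obtain x where "xs = [x]" using aa True by (cases xs) auto
      then have "(\<lambda>y. F n (xs[i := y])) = phi w" using i0 True by (simp add: F_def fun_eq_iff)
      then show ?thesis using phi_linear by simp
    qed
    have d: "F n xs \<in> Gr (sum_list ds + (1 - int n))" if aa: "length xs = n" "homog Gr xs ds" for xs ds
    proof -
      obtain x where x: "xs = [x]" using aa True by (cases xs) auto
      have ld: "length ds = 1" using aa True unfolding homog_def by simp
      obtain d where d: "ds = [d]" using ld by (cases ds) auto
      have "x \<in> Gr d" using aa(2) x d unfolding homog_def by simp
      then show ?thesis using x d True by (simp add: F_def phi_hom scale_in)
    qed
    show ?thesis unfolding graded_multilinear_def using l d by blast
  next
    case False
    have lz: "Vector_Spaces.linear scale scale (\<lambda>y. 0 :: 'v)"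
      by (rule linear_module_homI, rule module_hom.intro, rule V.module_axioms, rule V.module_axioms)
         (simp add: module_hom_axioms_def)
    have "F n = (\<lambda>_. 0)" using False by (simp add: F_def fun_eq_iff)
    then show ?thesis unfolding graded_multilinear_def using lz zero_in by simp
  qed
next
  fix n :: nat and xs ds assume n: "n \<ge> 1" "length xs = n" "homog Gr xs ds"
  have "F 1 [mt n xs] = phi w (mt n xs)" by (simp add: F_def)
  then show "ainf_lhs_term scale F scale mt xs ds = hom_rhs scale m F xs ds"
    using lhs_red[OF n(2,1)] rhs_red[OF n(3,2,1)] core[OF n(3,2,1)] by simp
qed

lemma chain: "phi w (mt 1 [x]) = m 1 [phi w x]"
proof (rule agree[where g="\<lambda>x. phi w (mt 1 [x])" and h="\<lambda>x. m 1 [phi w x]"])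
  show "phi w (mt 1 [x + y]) = phi w (mt 1 [x]) + phi w (mt 1 [y])" for x y
    using lin_add[OF m1_lin] by (simp add: mt_def phi_add V.scale_right_distrib)
  show "m 1 [phi w (x + y)] = m 1 [phi w x] + m 1 [phi w y]" for x y
    using lin_add[OF m1_lin] by (simp add: phi_add)
  show "phi w (mt 1 [y]) = m 1 [phi w y]" if "y \<in> Gr k" for k y
    using core[of "[y]" "[k]" 1] that by (simp add: homog_def)
qed

lemma phi0: "phi e 0 = 0" using phi_hom[OF zero_in[of 0]] by simp

lemma qi: "quasi_iso mt m F"
  unfolding quasi_iso_def
proof (intro conjI allI impI)
  have F1: "F 1 [x] = phi w x" for x by (simp add: F_def)
  have m10: "m 1 [0] = 0" using lin_zero[OF m1_lin] .
  have inv1: "phi w (phi wi v) = v" for v by (rule phi_inv) (rule w_wi)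
  have inv2: "phi wi (phi w v) = v" for v by (rule phi_inv) (rule w_wi)
  fix z assume z: "m 1 [z] = 0"
  let ?z = "phi wi z"
  have "phi w (mt 1 [?z]) = 0" using chain[of ?z] inv1 z by simp
  then have "mt 1 [?z] = 0" using inv2[of "mt 1 [?z]"] by (simp add: phi0)
  moreover have "F 1 [?z] - z = m 1 [0]" using F1 inv1 m10 by simp
  ultimately show "\<exists>z'. mt 1 [z'] = 0 \<and> (\<exists>u. F 1 [z'] - z = m 1 [u])" by blast
next
  have F1: "F 1 [x] = phi w x" for x by (simp add: F_def)
  have inv2: "phi wi (phi w v) = v" for v by (rule phi_inv) (rule w_wi)
  have inv1: "phi w (phi wi v) = v" for v by (rule phi_inv) (rule w_wi)
  fix z assume "mt 1 [z] = 0" "\<exists>u. F 1 [z] = m 1 [u]"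
  then obtain u where u: "phi w z = m 1 [u]" using F1 by auto
  have "phi w (mt 1 [phi wi u]) = phi w z" using chain[of "phi wi u"] inv1 u by simp
  then have "z = mt 1 [phi wi u]" by (metis inv2)
  then show "\<exists>v. z = mt 1 [v]" by blast
qed

end

theorem corollary2p3:
  fixes scale :: "'f::field \<Rightarrow> 'v::ab_group_add \<Rightarrow> 'v"
    and Gr :: "int \<Rightarrow> 'v set"
    and m :: "nat \<Rightarrow> 'v list \<Rightarrow> 'v"
    and lam :: 'f and a b :: int
  assumes "ainf_algebra scale Gr m"
    and "lam \<noteq> 0"
  shows "\<exists>f. ainf_hom scale Gr (\<lambda>k xs. scale (lam powi (a * int k + b)) (m k xs))
                     scale Gr m f
          \<and> quasi_iso (\<lambda>k xs. scale (lam powi (a * int k + b)) (m k xs)) m f"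
proof -
  have G: "graded_vs scale Gr" using assms(1) unfolding ainf_algebra_def by blast
  interpret ainfl scale Gr m lam a b
    by (rule ainfl.intro[OF gvs.intro[OF G] ainfl_axioms.intro[OF assms]])
  have e: "(\<lambda>k xs. scale (lam powi (a * int k + b)) (m k xs)) = mt"
    by (simp add: mt_def fun_eq_iff)
  show ?thesis unfolding e using F_hom qi by blast
qed

end
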